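(* Let $H$ be a hypergraph and $K$ a field, and let $f_{\mathcal E}\in I_H$ be the binomial arising from a balanced edge set $\mathcal E$ with $\operatorname{supp}(\mathcal E)\subseteq E(H)$ and $n=|\mathcal E_{blue}|\ge|\mathcal E_{red}|$. Then $f_{\mathcal E}$ is a linear combination, with coefficients in $K[t_e : e\in E(H)]$, of binomials in $I_H$ of degree less than $n$, provided one of the following two conditions holds: (i) there exists a proper splitting set $S$ of $\mathcal E$ with decomposition $(\Gamma_1,S,\Gamma_2)$ (with respect to which $S$ is proper) such that $|\Gamma_{i,blue}|<n$ and $|\Gamma_{i,red}|<n$ for $i=1,2$; or (ii) there is a blue splitting set $S$ of $\mathcal E$ with decomposition $(\Gamma_1,S,\Gamma_2)$ and a red splitting set $R$ of $\mathcal E$ with decomposition $(\Upsilon_1,R,\Upsilon_2)$, both of size less than $n$, such that $|\Gamma_{1,blue}|<n$, $|\Upsilon_{2,red}|<n$, $|\Gamma_{2,blue}|\le n$, $|\Upsilon_{1,red}|\le n$, and $S\cap R\neq\emptyset$.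
   Context: A hypergraph $H$ has vertex set $V=\{1,\dots,m\}$ and a set $E(H)$ of edges, each a nonempty subset of $V$ (no repeated edges); edges may have different sizes. The toric ideal $I_H$ is the kernel of $\phi_H: K[t_e : e\in E(H)]\to K[x_1,\dots,x_m]$, $t_e\mapsto\prod_{j\in e}x_j$. The degree of a binomial $u-v$ is the larger of the degrees of its monomials $u$, $v$. Multisets of edges: $|M|$ is the size with multiplicity; $\operatorname{supp}(M)$ the set of distinct elements; $\sqcup$ adds multiplicities; $\cap$ takes minimum multiplicities; $\subseteq$ is multiplicity-wise containment, and a proper submultiset is a contained, unequal one. A balanced edge set $\mathcal E$ is a pair of finite multisets $\mathcal E_{blue},\mathcal E_{red}$ of edges such that every vertex lies in the same number of blue as red edges, counted with multiplicity; $\operatorname{supp}(\mathcal E)=\operatorname{supp}(\mathcal E_{blue}\sqcup\mathcal E_{red})$; $f_{\mathcal E}=\prod_{e\in\mathcal E_{blue}}t_e-\prod_{e\in\mathcal E_{red}}t_e$ (with multiplicity). A balanced edge set $\mathcal F$ is reducible with separator $S$ and decomposition $(\Gamma_1,S,\Gamma_2)$ if $S$ is a nonempty multiset with $\operatorname{supp}(S)\subseteq\operatorname{supp}(\mathcal F)$ and there are balanced edge sets $\Gamma_1\neq\mathcal F$, $\Gamma_2\neq\mathcal F$ with $S=\Gamma_{1,red}\cap\Gamma_{2,blue}$, $\mathcal F_{blue}\sqcup\mathcal F_{red}=\Gamma_{1,blue}\sqcup\Gamma_{1,red}\sqcup\Gamma_{2,blue}\sqcup\Gamma_{2,red}$,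 $\Gamma_{1,red},\Gamma_{2,red}\subseteq\mathcal F_{red}$ and $\Gamma_{1,blue},\Gamma_{2,blue}\subseteq\mathcal F_{blue}$. $S$ is proper with respect to $(\Gamma_1,S,\Gamma_2)$ if $S$ is a proper submultiset of both $\Gamma_{1,red}$ and $\Gamma_{2,blue}$; if not proper, it is blue with respect to the decomposition if $\Gamma_{1,red}=S$ and red if $\Gamma_{2,blue}=S$. For a multiset $S$ of edges, $\mathcal E+S$ has blue part $\mathcal E_{blue}\sqcup S$ and red part $\mathcal E_{red}\sqcup S$. A nonempty multiset $S$ with $\operatorname{supp}(S)\subseteq E(H)$ is a splitting set of $\mathcal E$ with decomposition $(\Gamma_1,S,\Gamma_2)$ if $\mathcal E+S$ is reducible with separator $S$ and that decomposition; it is a blue (resp. red) splitting set with respect to the decomposition if $S$ is a blue (resp. red) separator of $\mathcal E+S$ with respect to it; it is proper if there is a decomposition with respect to which $S$ is a proper separator. *)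

theory Defs
  imports "HOL-Library.Multiset" "HOL-Library.Poly_Mapping"
begin

type_synonym edge = "nat set"

definition hypergraph :: "nat \<Rightarrow> edge set \<Rightarrow> bool" where
  "hypergraph m EH \<longleftrightarrow> (\<forall>e\<in>EH. e \<noteq> {} \<and> e \<subseteq> {1..m})"

text \<open>Polynomials in K[t_e : e an edge]: a monomial is a multiset of edges
  (exponents = multiplicities).  Polynomials in x_1..x_m: monomials are multisets of vertices.\<close>

type_synonym 'k tpoly = "edge multiset \<Rightarrow>\<^sub>0 'k"
type_synonym 'k xpoly = "nat multiset \<Rightarrow>\<^sub>0 'k"

definition tmon :: "edge multiset \<Rightarrow> 'k::comm_ring_1 tpoly" where
  "tmon M = Poly_Mapping.single M 1"

definition poly_ring :: "edge set \<Rightarrow> ('k::comm_ring_1) tpoly set" where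
  "poly_ring EH = {p. \<forall>M\<in>Poly_Mapping.keys p. set_mset M \<subseteq> EH}"

text \<open>Image of the monomial prod_{e in M} t_e under phi_H: prod_{e in M} prod_{j in e} x_j.\<close>
definition vmon :: "edge multiset \<Rightarrow> nat multiset" where
  "vmon M = (\<Sum>e\<in>#M. mset_set e)"

definition phi :: "('k::comm_ring_1) tpoly \<Rightarrow> 'k xpoly" where
  "phi p = (\<Sum>M\<in>Poly_Mapping.keys p. Poly_Mapping.single (vmon M) (Poly_Mapping.lookup p M))"

definition toric_ideal :: "edge set \<Rightarrow> ('k::comm_ring_1) tpoly set" where
  "toric_ideal EH = {p \<in> poly_ring EH. phi p = 0}"

definition low_binomials :: "edge set \<Rightarrow> nat \<Rightarrow> ('k::comm_ring_1) tpoly set" where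
  "low_binomials EH n = {g. \<exists>A B. g = tmon A - tmon B \<and> g \<in> toric_ideal EH
                              \<and> max (size A) (size B) < n}"

text \<open>Balanced edge sets: pairs (blue, red) of multisets of edges.\<close>
type_synonym bes = "edge multiset \<times> edge multiset"

abbreviation blue :: "bes \<Rightarrow> edge multiset" where "blue \<equiv> fst"
abbreviation red :: "bes \<Rightarrow> edge multiset" where "red \<equiv> snd"

definition balanced :: "bes \<Rightarrow> bool" where
  "balanced \<E> \<longleftrightarrow> (\<forall>v. size (filter_mset (\<lambda>e. v \<in> e) (blue \<E>))
                        = size (filter_mset (\<lambda>e. v \<in> e) (red \<E>)))"

definition bsupp :: "bes \<Rightarrow> edge set" where
  "bsupp \<E> = set_mset (blue \<E> + red \<E>)"

definition fE :: "bes \<Rightarrow> ('k::comm_ring_1) tpoly" where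
  "fE \<E> = tmon (blue \<E>) - tmon (red \<E>)"

definition reducible :: "bes \<Rightarrow> edge multiset \<Rightarrow> bes \<Rightarrow> bes \<Rightarrow> bool" where
  "reducible F S G1 G2 \<longleftrightarrow>
     S \<noteq> {#} \<and> set_mset S \<subseteq> bsupp F \<and>
     balanced G1 \<and> balanced G2 \<and> G1 \<noteq> F \<and> G2 \<noteq> F \<and>
     S = red G1 \<inter># blue G2 \<and>
     blue F + red F = blue G1 + red G1 + blue G2 + red G2 \<and>
     red G1 \<subseteq># red F \<and> red G2 \<subseteq># red F \<and>
     blue G1 \<subseteq># blue F \<and> blue G2 \<subseteq># blue F"

definition proper_sep :: "edge multiset \<Rightarrow> bes \<Rightarrow> bes \<Rightarrow> bool" where
  "proper_sep S G1 G2 \<longleftrightarrow> S \<subset># red G1 \<and> S \<subset># blue G2"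

definition blue_sep :: "edge multiset \<Rightarrow> bes \<Rightarrow> bes \<Rightarrow> bool" where
  "blue_sep S G1 G2 \<longleftrightarrow> \<not> proper_sep S G1 G2 \<and> red G1 = S"

definition red_sep :: "edge multiset \<Rightarrow> bes \<Rightarrow> bes \<Rightarrow> bool" where
  "red_sep S G1 G2 \<longleftrightarrow> \<not> proper_sep S G1 G2 \<and> blue G2 = S"

definition add_set :: "bes \<Rightarrow> edge multiset \<Rightarrow> bes" where
  "add_set \<E> S = (blue \<E> + S, red \<E> + S)"

definition splitting :: "edge set \<Rightarrow> bes \<Rightarrow> edge multiset \<Rightarrow> bes \<Rightarrow> bes \<Rightarrow> bool" where
  "splitting EH \<E> S G1 G2 \<longleftrightarrow>
     S \<noteq> {#} \<and> set_mset S \<subseteq> EH \<and> reducible (add_set \<E> S) S G1 G2"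

definition blue_splitting :: "edge set \<Rightarrow> bes \<Rightarrow> edge multiset \<Rightarrow> bes \<Rightarrow> bes \<Rightarrow> bool" where
  "blue_splitting EH \<E> S G1 G2 \<longleftrightarrow> splitting EH \<E> S G1 G2 \<and> blue_sep S G1 G2"

definition red_splitting :: "edge set \<Rightarrow> bes \<Rightarrow> edge multiset \<Rightarrow> bes \<Rightarrow> bes \<Rightarrow> bool" where
  "red_splitting EH \<E> S G1 G2 \<longleftrightarrow> splitting EH \<E> S G1 G2 \<and> red_sep S G1 G2"

definition lin_comb_low :: "edge set \<Rightarrow> nat \<Rightarrow> ('k::comm_ring_1) tpoly \<Rightarrow> bool" where
  "lin_comb_low EH n f \<longleftrightarrow>
     (\<exists>cs :: ('k tpoly \<times> 'k tpoly) list.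
        (\<forall>(c, g)\<in>set cs. c \<in> poly_ring EH \<and> g \<in> low_binomials EH n) \<and>
        f = (\<Sum>(c, g)\<leftarrow>cs. c * g))"

end

theory Submission
  imports Defs
begin

definition dg :: "edge multiset \<Rightarrow> nat \<Rightarrow> nat" where
  "dg M v = size (filter_mset (\<lambda>e. v \<in> e) M)"

lemma dg_plus[simp]: "dg (A + B) v = dg A v + dg B v"
  by (simp add: dg_def)

lemma dg_empty[simp]: "dg {#} v = 0"
  by (simp add: dg_def)

lemma dg_single[simp]: "dg {#e#} v = (if v \<in> e then 1 else 0)"
  by (simp add: dg_def)

lemma dg_diff: "B \<subseteq># A \<Longrightarrow> dg (A - B) v = dg A v - dg B v"
  by (simp add: dg_def size_Diff_submset multiset_filter_mono)

lemma balanced_dg: "balanced E \<longleftrightarrow> (\<forall>v. dg (fst E) v = dg (snd E) v)"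
  by (simp add: balanced_def dg_def)

lemma dg_zero:
  assumes "\<forall>e\<in>#M. e \<noteq> {}" and "\<forall>v. dg M v = 0"
  shows "M = {#}"
proof (rule ccontr)
  assume "M \<noteq> {#}"
  then obtain e where e: "e \<in># M" by blast
  with assms(1) obtain v where v: "v \<in> e" by blast
  have "e \<in># filter_mset (\<lambda>e. v \<in> e) M" using e v by simp
  then have "filter_mset (\<lambda>e. v \<in> e) M \<noteq> {#}" by (metis empty_iff set_mset_empty)
  then have "dg M v \<noteq> 0" unfolding dg_def by (metis size_eq_0_iff_empty)
  then show False using assms(2) by simp
qed

lemma count_vmon:
  assumes "\<forall>e\<in>#M. finite e"
  shows "count (vmon M) v = dg M v"
  using assms
proof (induction M)
  case empty
  then show ?case by (simp add: vmon_def)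
next
  case (add e M)
  then show ?case by (simp add: vmon_def count_mset_set' dg_def)
qed

lemma tmon_add: "(tmon (A + B) :: 'k::comm_ring_1 tpoly) = tmon A * tmon B"
  by (simp add: tmon_def mult_single)

lemma tmon_ring: "set_mset A \<subseteq> EH \<Longrightarrow> (tmon A :: 'k::field tpoly) \<in> poly_ring EH"
  by (simp add: tmon_def poly_ring_def)

lemma neg_ring: "(c :: 'k::field tpoly) \<in> poly_ring EH \<Longrightarrow> - c \<in> poly_ring EH"
  by (simp add: poly_ring_def)

lemma phi_bin:
  assumes "vmon A = vmon B"
  shows "phi (tmon A - tmon B :: 'k::field tpoly) = 0"
proof (cases "A = B")
  case True then show ?thesis by (simp add: phi_def)
next
  case False
  let ?p = "tmon A - tmon B :: 'k tpoly"
  have lA: "Poly_Mapping.lookup ?p A = 1" using False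
    by (simp add: tmon_def lookup_minus lookup_single)
  have lB: "Poly_Mapping.lookup ?p B = -1" using False
    by (simp add: tmon_def lookup_minus lookup_single)
  have "Poly_Mapping.keys ?p = {A, B}"
  proof
    show "Poly_Mapping.keys ?p \<subseteq> {A, B}"
      using keys_diff[of "tmon A" "tmon B"] by (auto simp: tmon_def)
    show "{A, B} \<subseteq> Poly_Mapping.keys ?p"
      using lA lB by (simp add: in_keys_iff)
  qed
  then show ?thesis using False lA lB assms
    by (simp add: phi_def single_add[symmetric])
qed

lemma low_bin:
  assumes "\<forall>e\<in>EH. e \<noteq> {} \<and> finite e"
    and "\<forall>v. dg A v = dg B v" and "set_mset A \<subseteq> EH" and "set_mset B \<subseteq> EH"
    and "size A < n" and "size B < n"
  shows "(tmon A - tmon B :: 'k::field tpoly) \<in> low_binomials EH n"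
proof -
  have "vmon A = vmon B"
    using assms(1-4) by (auto simp: multiset_eq_iff count_vmon subset_iff)
  then have "phi (tmon A - tmon B :: 'k tpoly) = 0" by (rule phi_bin)
  moreover have "(tmon A - tmon B :: 'k tpoly) \<in> poly_ring EH"
    using keys_diff[of "tmon A :: 'k tpoly" "tmon B"] assms(3,4)
    by (auto simp: poly_ring_def tmon_def split: if_splits)
  ultimately show ?thesis using assms(5,6)
    by (auto simp: low_binomials_def toric_ideal_def)
qed

lemma lcl_zero: "lin_comb_low EH n (0 :: 'k::field tpoly)"
  unfolding lin_comb_low_def by (rule exI[of _ "[]"]) simp

lemma lcl_single:
  "c \<in> poly_ring EH \<Longrightarrow> g \<in> low_binomials EH n \<Longrightarrow> lin_comb_low EH n (c * g :: 'k::field tpoly)"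
  unfolding lin_comb_low_def by (rule exI[of _ "[(c,g)]"]) simp

lemma lcl_add:
  assumes "lin_comb_low EH n (f :: 'k::field tpoly)" "lin_comb_low EH n g"
  shows "lin_comb_low EH n (f + g)"
proof -
  obtain cs where cs: "\<forall>(c, g)\<in>set cs. c \<in> poly_ring EH \<and> g \<in> low_binomials EH n"
     "f = (\<Sum>(c, g)\<leftarrow>cs. c * g)" using assms(1) unfolding lin_comb_low_def by blast
  obtain ds where ds: "\<forall>(c, g)\<in>set ds. c \<in> poly_ring EH \<and> g \<in> low_binomials EH n"
     "g = (\<Sum>(c, g)\<leftarrow>ds. c * g)" using assms(2) unfolding lin_comb_low_def by blast
  show ?thesis unfolding lin_comb_low_def
    by (rule exI[of _ "cs @ ds"]) (use cs ds in auto)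
qed

lemma lcl_neg:
  assumes "lin_comb_low EH n (f :: 'k::field tpoly)"
  shows "lin_comb_low EH n (- f)"
proof -
  obtain cs where cs: "\<forall>(c, g)\<in>set cs. c \<in> poly_ring EH \<and> g \<in> low_binomials EH n"
     "f = (\<Sum>(c, g)\<leftarrow>cs. c * g)" using assms(1) unfolding lin_comb_low_def by blast
  have "- f = (\<Sum>(c, g)\<leftarrow>map (\<lambda>(c,g). (-c, g)) cs. c * g)"
    unfolding cs(2) by (induction cs) auto
  moreover have "\<forall>(c, g)\<in>set (map (\<lambda>(c,g). (-c, g)) cs). c \<in> poly_ring EH \<and> g \<in> low_binomials EH n"
    using cs(1) by (auto simp: neg_ring)
  ultimately show ?thesis unfolding lin_comb_low_def by blast
qed

lemma nonempty_sub:
  assumes "\<forall>e\<in>EH. e \<noteq> {} \<and> finite e" "set_mset E \<subseteq> EH" "M \<subseteq># E"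
  shows "\<forall>e\<in>#M. e \<noteq> {}"
  using assms set_mset_mono by blast

lemma sub_pair:
  assumes EHok: "\<forall>e\<in>EH. e \<noteq> {} \<and> finite e"
    and bal: "\<forall>v. dg Eb v = dg Er v" and sb: "set_mset Eb \<subseteq> EH" and sr: "set_mset Er \<subseteq> EH"
    and n: "size Eb = n" "size Er \<le> n"
    and Y: "Y \<subseteq># Eb" and X: "X \<subseteq># Er" and bYX: "\<forall>v. dg Y v = dg X v" and Yne: "Y \<noteq> {#}"
    and ne: "\<not> (Y = Eb \<and> X = Er)"
  shows "lin_comb_low EH n (tmon Eb - tmon Er :: 'k::field tpoly)"
proof -
  define Eb' where "Eb' = Eb - Y"
  define Er' where "Er' = Er - X"
  have bal': "\<forall>v. dg Eb' v = dg Er' v" using bal bYX Y X by (simp add: dg_diff Eb'_def Er'_def)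
  have neY: "\<forall>e\<in>#Y. e \<noteq> {}" using nonempty_sub[OF EHok sb Y] .
  have neX: "\<forall>e\<in>#X. e \<noteq> {}" using nonempty_sub[OF EHok sr X] .
  have neEb': "\<forall>e\<in>#Eb'. e \<noteq> {}" using nonempty_sub[OF EHok sb diff_subset_eq_self] Eb'_def by simp
  have neEr': "\<forall>e\<in>#Er'. e \<noteq> {}" using nonempty_sub[OF EHok sr diff_subset_eq_self] Er'_def by simp
  have Xne: "X \<noteq> {#}"
  proof
    assume "X = {#}"
    then have "Y = {#}" using dg_zero[OF neY] bYX by simp
    then show False using Yne by simp
  qed
  have YEb: "Y \<noteq> Eb"
  proof
    assume "Y = Eb"
    then have "Eb' = {#}" by (simp add: Eb'_def)
    then have "Er' = {#}" using dg_zero[OF neEr'] bal' by simp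
    then have "X = Er" using X by (simp add: Er'_def Diff_eq_empty_iff_mset subset_mset.antisym)
    then show False using ne \<open>Y = Eb\<close> by simp
  qed
  have XEr: "X \<noteq> Er"
  proof
    assume "X = Er"
    then have "Er' = {#}" by (simp add: Er'_def)
    then have "Eb' = {#}" using dg_zero[OF neEb'] bal' by simp
    then have "Y = Eb" using Y by (simp add: Eb'_def Diff_eq_empty_iff_mset subset_mset.antisym)
    then show False using YEb by simp
  qed
  have sY: "size Y < n" using Y YEb n mset_subset_size by (metis subset_mset.le_neq_trans)
  have sX: "size X < n" using X XEr n mset_subset_size by (metis subset_mset.le_neq_trans order_less_le_trans)
  have sEb': "size Eb' < n" using Y Yne n size_mset_mono[OF Y] by (simp add: Eb'_def size_Diff_submset nonempty_has_size)
  have sEr': "size Er' < n" using X Xne n size_mset_mono[OF X] by (simp add: Er'_def size_Diff_submset nonempty_has_size)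
  have Eb: "Eb = Eb' + Y" using Y by (simp add: Eb'_def)
  have Er: "Er = Er' + X" using X by (simp add: Er'_def)
  have id: "(tmon Eb - tmon Er :: 'k tpoly) = tmon Eb' * (tmon Y - tmon X) + tmon X * (tmon Eb' - tmon Er')"
    unfolding Eb Er tmon_add by (simp add: algebra_simps)
  have setY: "set_mset Y \<subseteq> EH" using Y sb set_mset_mono by blast
  have setX: "set_mset X \<subseteq> EH" using X sr set_mset_mono by blast
  have setEb': "set_mset Eb' \<subseteq> EH" using sb by (auto simp: Eb'_def dest: in_diffD)
  have setEr': "set_mset Er' \<subseteq> EH" using sr by (auto simp: Er'_def dest: in_diffD)
  show ?thesis unfolding id
    apply (rule lcl_add; rule lcl_single)
    using EHok bYX bal' setY setX setEb' setEr' sY sX sEb' sEr'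
    by (auto intro!: tmon_ring low_bin)
qed

lemma normalize:
  assumes EHok: "\<forall>e\<in>EH. e \<noteq> {} \<and> finite e"
    and bal: "\<forall>v. dg Eb v = dg Er v" and sb: "set_mset Eb \<subseteq> EH" and sr: "set_mset Er \<subseteq> EH"
    and n: "size Eb = n" "size Er \<le> n"
    and UW: "U + W = Eb + Er" and bUW: "\<forall>v. dg U v = dg W v"
    and nl: "\<not> lin_comb_low EH n (tmon Eb - tmon Er :: 'k::field tpoly)"
  shows "(U = Eb \<and> W = Er) \<or> (U = Er \<and> W = Eb)"
proof -
  define X where "X = U - Eb"
  define Y where "Y = Eb - U"
  have Y: "Y \<subseteq># Eb" by (simp add: Y_def)
  have cnt: "count U x + count W x = count Eb x + count Er x" for x
    using arg_cong[OF UW, of "\<lambda>M. count M x"] by simp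
  have X: "X \<subseteq># Er" unfolding X_def subseteq_mset_def
  proof
    fix x show "count (U - Eb) x \<le> count Er x" using cnt[of x] by simp
  qed
  have e1: "U + Y = Eb + X"
  proof (rule multiset_eqI)
    fix x show "count (U + Y) x = count (Eb + X) x" using cnt[of x] by (simp add: X_def Y_def)
  qed
  have e2: "W + X = Er + Y"
  proof (rule multiset_eqI)
    fix x show "count (W + X) x = count (Er + Y) x" using cnt[of x] by (simp add: X_def Y_def)
  qed
  have bYX: "\<forall>v. dg Y v = dg X v"
  proof
    fix v
    have "dg U v + dg Y v = dg Eb v + dg X v" using arg_cong[OF e1, of "\<lambda>M. dg M v"] by simp
    moreover have "dg W v + dg X v = dg Er v + dg Y v" using arg_cong[OF e2, of "\<lambda>M. dg M v"] by simp
    ultimately show "dg Y v = dg X v" using bal[rule_format, of v] bUW[rule_format, of v] by linarith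
  qed
  show ?thesis
  proof (cases "Y = {#}")
    case True
    have neX: "\<forall>e\<in>#X. e \<noteq> {}" using nonempty_sub[OF EHok sr X] .
    have "X = {#}" using dg_zero[OF neX] bYX True by simp
    then have "U = Eb" using e1 True by simp
    then have "W = Er" using UW by simp
    then show ?thesis using \<open>U = Eb\<close> by simp
  next
    case False
    have "Y = Eb \<and> X = Er"
      using sub_pair[OF EHok bal sb sr n Y X bYX False] nl by blast
    then have "U = Er" using e1 by (metis add.commute add_left_cancel)
    then have "W = Eb" using UW by (metis add.commute add_left_cancel)
    then show ?thesis using \<open>U = Er\<close> by simp
  qed
qed

lemma split_UW:
  assumes "reducible (add_set (Eb, Er) S) S (b1, r1) (b2, r2)"
  shows "b1 + b2 - S + (r1 + r2 - S) = Eb + Er"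
    "\<forall>v. dg (b1 + b2 - S) v = dg (r1 + r2 - S) v"
    "S \<subseteq># r1" "S \<subseteq># b2"
    "b1 \<subseteq># Eb + S" "b2 \<subseteq># Eb + S" "r1 \<subseteq># Er + S" "r2 \<subseteq># Er + S"
    "\<forall>v. dg b1 v = dg r1 v" "\<forall>v. dg b2 v = dg r2 v"
proof -
  have S: "S = r1 \<inter># b2" and sum: "Eb + S + (Er + S) = b1 + r1 + b2 + r2"
    and bal1: "balanced (b1, r1)" and bal2: "balanced (b2, r2)"
    and sub: "b1 \<subseteq># Eb + S" "b2 \<subseteq># Eb + S" "r1 \<subseteq># Er + S" "r2 \<subseteq># Er + S"
    using assms by (auto simp: reducible_def add_set_def)
  show "b1 \<subseteq># Eb + S" "b2 \<subseteq># Eb + S" "r1 \<subseteq># Er + S" "r2 \<subseteq># Er + S" using sub by auto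
  show S1: "S \<subseteq># r1" using S by simp
  show S2: "S \<subseteq># b2" using S by simp
  have cnt: "count Eb x + count S x + (count Er x + count S x) = count b1 x + count r1 x + count b2 x + count r2 x" for x
    using arg_cong[OF sum, of "\<lambda>M. count M x"] by simp
  show "b1 + b2 - S + (r1 + r2 - S) = Eb + Er"
  proof (rule multiset_eqI)
    fix x
    have "count S x \<le> count r1 x" "count S x \<le> count b2 x" using S1 S2 by (auto simp: subseteq_mset_def)
    then show "count (b1 + b2 - S + (r1 + r2 - S)) x = count (Eb + Er) x" using cnt[of x] by simp
  qed
  show d1: "\<forall>v. dg b1 v = dg r1 v" using bal1 by (simp add: balanced_dg)
  show d2: "\<forall>v. dg b2 v = dg r2 v" using bal2 by (simp add: balanced_dg)
  have s1: "S \<subseteq># b1 + b2" using S2 by (meson subset_mset.add_increasing mset_subset_eq_add_right subset_mset.order_trans)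
  have s2: "S \<subseteq># r1 + r2" using S1 by (meson mset_subset_eq_add_left subset_mset.order_trans)
  show "\<forall>v. dg (b1 + b2 - S) v = dg (r1 + r2 - S) v"
    using d1 d2 by (simp add: dg_diff[OF s1] dg_diff[OF s2])
qed

lemma set_sub:
  assumes "M \<subseteq># A + B" "set_mset A \<subseteq> EH" "set_mset B \<subseteq> EH"
  shows "set_mset M \<subseteq> EH"
  using set_mset_mono[OF assms(1)] assms(2,3) by auto

theorem proposition5p3:
  fixes m :: nat and EH :: "edge set" and \<E> :: bes and n :: nat
  assumes "hypergraph m EH"
    and "balanced \<E>" and "bsupp \<E> \<subseteq> EH"
    and "n = size (blue \<E>)" and "size (blue \<E>) \<ge> size (red \<E>)"
    and "(\<exists>S G1 G2. splitting EH \<E> S G1 G2 \<and> proper_sep S G1 G2 \<and>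
             size (blue G1) < n \<and> size (red G1) < n \<and>
             size (blue G2) < n \<and> size (red G2) < n)
       \<or> (\<exists>S G1 G2 R U1 U2. blue_splitting EH \<E> S G1 G2 \<and> red_splitting EH \<E> R U1 U2 \<and>
             size S < n \<and> size R < n \<and>
             size (blue G1) < n \<and> size (red U2) < n \<and>
             size (blue G2) \<le> n \<and> size (red U1) \<le> n \<and>
             S \<inter># R \<noteq> {#})"
  shows "lin_comb_low EH n (fE \<E> :: 'k::field tpoly)"
proof -
  obtain Eb Er where E: "\<E> = (Eb, Er)" by (cases \<E>)
  have EHok: "\<forall>e\<in>EH. e \<noteq> {} \<and> finite e"
    using assms(1) unfolding hypergraph_def by (meson finite_atLeastAtMost finite_subset)
  have bal: "\<forall>v. dg Eb v = dg Er v" using assms(2) E by (simp add: balanced_dg)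
  have sb: "set_mset Eb \<subseteq> EH" and sr: "set_mset Er \<subseteq> EH" using assms(3) E by (auto simp: bsupp_def)
  have n: "size Eb = n" "size Er \<le> n" using assms(4,5) E by auto
  have fE: "fE \<E> = (tmon Eb - tmon Er :: 'k tpoly)" using E by (simp add: fE_def)
  show ?thesis unfolding fE
  proof (rule ccontr)
    assume nl: "\<not> lin_comb_low EH n (tmon Eb - tmon Er :: 'k tpoly)"
    have disj: "e \<notin># Er" if "e \<in># Eb" for e
    proof
      assume e: "e \<in># Er"
      show False
      proof (cases "Eb = {#e#} \<and> Er = {#e#}")
        case True
        then have "(tmon Eb - tmon Er :: 'k tpoly) = 0" by simp
        then show False using nl lcl_zero by metis
      next
        case False
        have "lin_comb_low EH n (tmon Eb - tmon Er :: 'k tpoly)"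
          by (rule sub_pair[OF EHok bal sb sr n, of "{#e#}" "{#e#}"]) (use that e False in auto)
        then show False using nl by simp
      qed
    qed
    have norm: "(U = Eb \<and> W = Er) \<or> (U = Er \<and> W = Eb)"
      if "U + W = Eb + Er" "\<forall>v. dg U v = dg W v" for U W
      using normalize[OF EHok bal sb sr n that nl] .
    from assms(6) show False
    proof (elim disjE exE conjE)
      fix S G1 G2
      assume spl: "splitting EH \<E> S G1 G2" and sz: "size (blue G1) < n" "size (red G1) < n"
             "size (blue G2) < n" "size (red G2) < n"
      obtain b1 r1 where G1: "G1 = (b1, r1)" by (cases G1)
      obtain b2 r2 where G2: "G2 = (b2, r2)" by (cases G2)
      have red: "reducible (add_set (Eb, Er) S) S (b1, r1) (b2, r2)" and sS: "set_mset S \<subseteq> EH"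
        using spl E G1 G2 by (auto simp: splitting_def)
      note sp = split_UW[OF red]
      define U where "U = b1 + b2 - S"
      define W where "W = r1 + r2 - S"
      define B where "B = b2 - S"
      define A where "A = r1 - S"
      have b2: "b2 = B + S" using sp(4) by (simp add: B_def)
      have r1: "r1 = A + S" using sp(3) by (simp add: A_def)
      have U: "U = b1 + B"
      proof (rule multiset_eqI)
        fix x
        have "count S x \<le> count b2 x" using sp(4) by (simp add: subseteq_mset_def)
        then show "count (U) x = count (b1 + B) x" using U_def B_def by simp
      qed
      have W: "W = A + r2"
      proof (rule multiset_eqI)
        fix x
        have "count S x \<le> count r1 x" using sp(3) by (simp add: subseteq_mset_def)
        then show "count (W) x = count (A + r2) x" using W_def A_def by simp
      qed
      have id: "(tmon U - tmon W :: 'k tpoly) = tmon B * (tmon b1 - tmon r1) + tmon A * (tmon b2 - tmon r2)"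
        unfolding U W b2 r1 tmon_add by (simp add: algebra_simps)
      have sets: "set_mset b1 \<subseteq> EH" "set_mset b2 \<subseteq> EH" "set_mset r1 \<subseteq> EH" "set_mset r2 \<subseteq> EH"
        using set_sub[OF sp(5) sb sS] set_sub[OF sp(6) sb sS] set_sub[OF sp(7) sr sS] set_sub[OF sp(8) sr sS]
        by auto
      have setAB: "set_mset A \<subseteq> EH" "set_mset B \<subseteq> EH" using sets r1 b2 by auto
      have lU: "lin_comb_low EH n (tmon U - tmon W :: 'k tpoly)"
        unfolding id
        apply (rule lcl_add; rule lcl_single)
        using EHok sp(9,10) sets setAB sz G1 G2
        by (auto intro!: tmon_ring low_bin)
      have "(U = Eb \<and> W = Er) \<or> (U = Er \<and> W = Eb)"
        using norm[OF sp(1)[folded U_def W_def] sp(2)[folded U_def W_def]] .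
      then show False
      proof
        assume "U = Eb \<and> W = Er"
        then show False using lU nl by simp
      next
        assume "U = Er \<and> W = Eb"
        then have "(tmon Eb - tmon Er :: 'k tpoly) = - (tmon U - tmon W)" by simp
        then show False using lcl_neg[OF lU] nl by simp
      qed
    next
      fix S G1 G2 R U1 U2
      assume bs: "blue_splitting EH \<E> S G1 G2" and rs: "red_splitting EH \<E> R U1 U2"
        and sz: "size S < n" "size R < n" "size (blue G1) < n" "size (red U2) < n"
           "size (blue G2) \<le> n" "size (red U1) \<le> n"
        and SR: "S \<inter># R \<noteq> {#}"
      obtain b1 r1 where G1: "G1 = (b1, r1)" by (cases G1)
      obtain b2 r2 where G2: "G2 = (b2, r2)" by (cases G2)
      obtain a1 c1 where U1: "U1 = (a1, c1)" by (cases U1)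
      obtain a2 c2 where U2: "U2 = (a2, c2)" by (cases U2)
      have redS: "reducible (add_set (Eb, Er) S) S (b1, r1) (b2, r2)" and sS: "set_mset S \<subseteq> EH"
        and r1S: "r1 = S"
        using bs E G1 G2 by (auto simp: blue_splitting_def splitting_def blue_sep_def)
      have redR: "reducible (add_set (Eb, Er) R) R (a1, c1) (a2, c2)" and sR: "set_mset R \<subseteq> EH"
        and a2R: "a2 = R"
        using rs E U1 U2 by (auto simp: red_splitting_def splitting_def red_sep_def)
      note sp = split_UW[OF redS]
      note sq = split_UW[OF redR]
      have sets: "set_mset b1 \<subseteq> EH" "set_mset b2 \<subseteq> EH" "set_mset r1 \<subseteq> EH" "set_mset r2 \<subseteq> EH"
        using set_sub[OF sp(5) sb sS] set_sub[OF sp(6) sb sS] set_sub[OF sp(7) sr sS] set_sub[OF sp(8) sr sS]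
        by auto
      have sets': "set_mset a1 \<subseteq> EH" "set_mset a2 \<subseteq> EH" "set_mset c1 \<subseteq> EH" "set_mset c2 \<subseteq> EH"
        using set_sub[OF sq(5) sb sR] set_sub[OF sq(6) sb sR] set_sub[OF sq(7) sr sR] set_sub[OF sq(8) sr sR]
        by auto
      have W1: "r1 + r2 - S = r2" using r1S by simp
      have nb: "(b1 + b2 - S = Eb \<and> r2 = Er) \<or> (b1 + b2 - S = Er \<and> r2 = Eb)"
        using norm[OF sp(1) sp(2)] W1 by simp
      have blueEq: "b1 + b2 - S = Eb \<and> r2 = Er"
      proof (rule ccontr)
        assume "\<not> ?thesis"
        then have r2: "r2 = Eb" using nb by blast
        have "Eb \<subseteq># S" unfolding subseteq_mset_def
        proof
          fix x
          have le: "count Eb x \<le> count Er x + count S x" using sp(8) r2 by (simp add: subseteq_mset_def)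
          show "count Eb x \<le> count S x"
          proof (cases "x \<in># Eb")
            case True then have "count Er x = 0" using disj by (simp add: not_in_iff)
            then show ?thesis using le by simp
          next
            case False then show ?thesis by (simp add: not_in_iff)
          qed
        qed
        then have "n \<le> size S" using n size_mset_mono by metis
        then show False using sz by simp
      qed
      have U1': "a1 + a2 - R = a1" using a2R by simp
      have nr: "(a1 = Eb \<and> c1 + c2 - R = Er) \<or> (a1 = Er \<and> c1 + c2 - R = Eb)"
        using norm[OF sq(1) sq(2)] U1' by simp
      have redEq: "a1 = Eb \<and> c1 + c2 - R = Er"
      proof (rule ccontr)
        assume "\<not> ?thesis"
        then have c: "c1 + c2 - R = Eb" using nr by blast
        have Rc1: "R \<subseteq># c1" using sq(3) .
        have "Eb \<subseteq># R" unfolding subseteq_mset_def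
        proof
          fix x
          have e: "count c1 x + count c2 x - count R x = count Eb x"
            using arg_cong[OF c, of "\<lambda>M. count M x"] by simp
          have r: "count R x \<le> count c1 x" using Rc1 by (simp add: subseteq_mset_def)
          have l1: "count c1 x \<le> count Er x + count R x" using sq(7) by (simp add: subseteq_mset_def)
          have l2: "count c2 x \<le> count Er x + count R x" using sq(8) by (simp add: subseteq_mset_def)
          show "count Eb x \<le> count R x"
          proof (cases "x \<in># Eb")
            case True then have "count Er x = 0" using disj by (simp add: not_in_iff)
            then show ?thesis using e r l1 l2 by linarith
          next
            case False then show ?thesis by (simp add: not_in_iff)
          qed
        qed
        then have "n \<le> size R" using n size_mset_mono by metis
        then show False using sz by simp
      qed
      define B where "B = b2 - S"
      have b2: "b2 = B + S" using sp(4) by (simp add: B_def)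
      have EbB0: "b1 + b2 - S = b1 + B"
      proof (rule multiset_eqI)
        fix x
        have "count S x \<le> count b2 x" using sp(4) by (simp add: subseteq_mset_def)
        then show "count (b1 + b2 - S) x = count (b1 + B) x" using B_def by simp
      qed
      have EbB: "Eb = b1 + B" using EbB0 blueEq by simp
      have id1: "(tmon Eb - tmon b2 :: 'k tpoly) = tmon B * (tmon b1 - tmon S)"
        unfolding EbB b2 tmon_add by (simp add: algebra_simps)
      have setB: "set_mset B \<subseteq> EH" using sets b2 by auto
      have l1: "lin_comb_low EH n (tmon Eb - tmon b2 :: 'k tpoly)"
        unfolding id1 apply (rule lcl_single)
        using EHok sp(9) sets setB sS sz G1 r1S by (auto intro!: tmon_ring low_bin)
      define C where "C = c1 - R"
      have c1: "c1 = C + R" using sq(3) by (simp add: C_def)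
      have ErC0: "c1 + c2 - R = C + c2"
      proof (rule multiset_eqI)
        fix x
        have "count R x \<le> count c1 x" using sq(3) by (simp add: subseteq_mset_def)
        then show "count (c1 + c2 - R) x = count (C + c2) x" using C_def by simp
      qed
      have ErC: "Er = C + c2" using ErC0 redEq by simp
      have id3: "(tmon c1 - tmon Er :: 'k tpoly) = tmon C * (tmon a2 - tmon c2)"
        unfolding ErC c1 a2R tmon_add by (simp add: algebra_simps)
      have setC: "set_mset C \<subseteq> EH" using sets' c1 by auto
      have l3: "lin_comb_low EH n (tmon c1 - tmon Er :: 'k tpoly)"
        unfolding id3 apply (rule lcl_single)
        using EHok sq(10) sets' setC sR sz U2 a2R by (auto intro!: tmon_ring low_bin)
      obtain e where e: "e \<in># S \<inter># R" using SR by (meson multiset_nonemptyE)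
      have eb2: "e \<in># b2" using e sp(4) by (meson inter_iff mset_subset_eqD) 
      have ec1: "e \<in># c1" using e sq(3) by (meson inter_iff mset_subset_eqD)
      define B2 where "B2 = b2 - {#e#}"
      define C1 where "C1 = c1 - {#e#}"
      have b2e: "b2 = {#e#} + B2" using eb2 by (simp add: B2_def)
      have c1e: "c1 = {#e#} + C1" using ec1 by (simp add: C1_def)
      have id2: "(tmon b2 - tmon c1 :: 'k tpoly) = tmon {#e#} * (tmon (b2 - {#e#}) - tmon (c1 - {#e#}))"
        unfolding B2_def[symmetric] C1_def[symmetric] unfolding b2e c1e tmon_add by (simp add: algebra_simps)
      have dgb2: "\<forall>v. dg b2 v = dg Er v" using sp(10) blueEq by simp
      have dgc1: "\<forall>v. dg c1 v = dg Eb v" using sq(9) redEq by simp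
      have bal2: "\<forall>v. dg (b2 - {#e#}) v = dg (c1 - {#e#}) v"
        using dgb2 dgc1 bal eb2 ec1 by (simp add: dg_diff)
      have sz2: "size (b2 - {#e#}) < n" "size (c1 - {#e#}) < n"
        using eb2 ec1 sz G2 U1 by (auto simp: size_Diff_singleton nonempty_has_size)
      have setse: "set_mset (b2 - {#e#}) \<subseteq> EH" "set_mset (c1 - {#e#}) \<subseteq> EH"
        using sets sets' by (auto dest: in_diffD)
      have eEH: "set_mset {#e#} \<subseteq> EH" using eb2 sets by auto
      have l2: "lin_comb_low EH n (tmon b2 - tmon c1 :: 'k tpoly)"
        unfolding id2 apply (rule lcl_single)
        using EHok bal2 sz2 setse eEH by (auto intro!: tmon_ring low_bin)
      have "(tmon Eb - tmon Er :: 'k tpoly) = (tmon Eb - tmon b2) + (tmon b2 - tmon c1) + (tmon c1 - tmon Er)"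
        by simp
      then have "lin_comb_low EH n (tmon Eb - tmon Er :: 'k tpoly)"
        using lcl_add[OF lcl_add[OF l1 l2] l3] by simp
      then show False using nl by simp
    qed
  qed
qed

end
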